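(* In the setting described in the context, assume $G$ satisfies Condition 1. Then for every $r\ge0$ there exists a subset $\mathcal{I}_r$ of the non-faulty agents with $|\mathcal{I}_r|\ge\max\{sp(\mathbf{A}),f+1\}$ such that $\pi_i(r)\ge\beta^{\nu}$ for every $i\in\mathcal{I}_r$.
   Context: A synchronous system of $n$ agents communicates over a directed graph $G=(\mathcal{V},\mathcal{E})$, $\mathcal{V}=\{1,\dots,n\}$, without self-loops; $N_i^-=\{j:(j,i)\in\mathcal{E}\}$. At most $f$ agents are Byzantine faulty (may send arbitrary, possibly inconsistent values); $\mathcal{F}$ is the set of faulty agents, $\phi=|\mathcal{F}|\le f$, and the non-faulty agents are indexed $1,\dots,n-\phi$. An assignment matrix $\mathbf{A}\in\mathbb{R}^{k\times n}$ has nonnegative entries and columns summing to $1$; agent $i$ holds $g_i=\sum_{j=1}^k\mathbf{A}_{ji}h_j$ for admissible (convex, $L$-Lipschitz, nonempty compact argmin) $h_1,\dots,h_k:\mathbb{R}\to\mathbb{R}$. Sparsity parameter $sp(\mathbf{A})$: smallest $s$ such that the sum of any $s$ columns of $\mathbf{A}$ is component-wise positive ($n+1$ if the sum of all columns is not). Reduced graph w.r.t. $\mathcal{F}$: subgraph of $G$ obtained by removing the nodes of $\mathcal{F}$ with their edges and then removing up to $f$ additional incoming edges at each remaining node; $R_{\mathcal{F}}$ is the set of all reduced graphs, $\tau=|R_{\mathcal{F}}|$. A source component of a graph is the set of its nodes each having a directed path to every other node of the graph. Condition 1: for every $\mathcal{F}'\subseteq\mathcal{V}$ with $|\mathcal{F}'|\le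 f$, every reduced graph w.r.t. $\mathcal{F}'$ has a source component with at least $\max\{f+1,sp(\mathbf{A})\}$ nodes. Algorithm 2 (run by non-faulty agents, step sizes $\alpha(t)$): arbitrary $x_i(0)$; in iteration $t\ge1$ agent $i$ sends $x_i(t-1)$ to all out-neighbors, receives a multiset of $|N_i^-|$ values (default value for missing messages), discards the $f$ smallest and $f$ largest values, lets $N_i^*(t)$ be the senders of the remaining values with $w_j$ the value from $j$, sets $w_i=x_i(t-1)$, and updates $x_i(t)=\frac{1}{|N_i^*(t)|+1}\sum_{j\in\{i\}\cup N_i^*(t)}w_j-\alpha(t-1)d_i(t-1)$, with $d_i(t-1)$ a (sub)gradient of $g_i$ at $x_i(t-1)$. Known facts: with $\mathbf{x}(t)\in\mathbb{R}^{n-\phi}$ the non-faulty states and $\mathbf{d}(t)$ the vector of $d_i(t)$, $\mathbf{x}(t+1)=\mathbf{M}(t)\mathbf{x}(t)-\alpha(t)\mathbf{d}(t)$ for row-stochastic $(n-\phi)\times(n-\phi)$ matrices $\mathbf{M}(t)$, and there is a constant $0<\beta<1$ such that for every $t$ some reduced graph $\mathcal{H}(t)\in R_{\mathcal{F}}$ with adjacency matrix $\mathbf{H}(t)$ ($\mathbf{H}_{ij}(t)=1$ if $i=j$ or $(j,i)$ is an edge of $\mathcal{H}(t)$, else $0$) satisfies $\mathbf{M}(t)\ge\beta\mathbf{H}(t)$ entrywise. Let $\Phi(t,r)=\mathbf{M}(t)\cdots\mathbf{M}(r)$ for $t\ge r$ and $\nu=\tau(n-\phi)$. Under Condition 1,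 for each $r$ the limit $\lim_{t\to\infty}\Phi(t,r)=\mathbf{1}\pi(r)$ exists, where $\mathbf{1}$ is the all-ones column vector and $\pi(r)=(\pi_1(r),\dots,\pi_{n-\phi}(r))$ is a stochastic row vector. *)

theory Defs
  imports "HOL-Analysis.Analysis"
begin

text \<open>Agents are 1..n. A graph is an edge set E with (j,i) meaning an edge from j to i.
  Matrices are functions nat => nat => real restricted to an index set.\<close>

definition agents :: "nat \<Rightarrow> nat set" where
  "agents n = {1..n}"

definition sp_cond :: "nat \<Rightarrow> nat \<Rightarrow> (nat \<Rightarrow> nat \<Rightarrow> real) \<Rightarrow> nat \<Rightarrow> bool" where
  "sp_cond k n A s \<longleftrightarrow> (\<forall>S. S \<subseteq> {1..n} \<longrightarrow> card S = s \<longrightarrow> (\<forall>j\<in>{1..k}. 0 < (\<Sum>i\<in>S. A j i)))"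

definition sp :: "nat \<Rightarrow> nat \<Rightarrow> (nat \<Rightarrow> nat \<Rightarrow> real) \<Rightarrow> nat" where
  "sp k n A = (if \<exists>s\<le>n. sp_cond k n A s then (LEAST s. s \<le> n \<and> sp_cond k n A s) else n + 1)"

definition assignment_matrix :: "nat \<Rightarrow> nat \<Rightarrow> (nat \<Rightarrow> nat \<Rightarrow> real) \<Rightarrow> bool" where
  "assignment_matrix k n A \<longleftrightarrow> (\<forall>j\<in>{1..k}. \<forall>i\<in>{1..n}. 0 \<le> A j i) \<and> (\<forall>i\<in>{1..n}. (\<Sum>j\<in>{1..k}. A j i) = 1)"

text \<open>A reduced graph of (V,E) w.r.t. F (with parameter f): node set V - F, edge set H obtained by
  removing the nodes of F with their edges and then at most f further incoming edges at each
  remaining node.\<close>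
definition reduced_graph :: "nat set \<Rightarrow> (nat \<times> nat) set \<Rightarrow> nat \<Rightarrow> nat set \<Rightarrow> (nat \<times> nat) set \<Rightarrow> bool" where
  "reduced_graph V E f F H \<longleftrightarrow>
     H \<subseteq> {(j,i). (j,i) \<in> E \<and> j \<in> V - F \<and> i \<in> V - F} \<and>
     (\<forall>i\<in>V - F. card ({j. (j,i) \<in> E \<and> j \<in> V - F} - {j. (j,i) \<in> H}) \<le> f)"

definition source_component :: "nat set \<Rightarrow> (nat \<times> nat) set \<Rightarrow> nat set" where
  "source_component W H = {u \<in> W. \<forall>v\<in>W. v \<noteq> u \<longrightarrow> (u, v) \<in> H\<^sup>+}"

definition condition1 :: "nat set \<Rightarrow> (nat \<times> nat) set \<Rightarrow> nat \<Rightarrow> nat \<Rightarrow> bool" where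
  "condition1 V E f s \<longleftrightarrow>
     (\<forall>F'. F' \<subseteq> V \<longrightarrow> card F' \<le> f \<longrightarrow>
        (\<forall>H. reduced_graph V E f F' H \<longrightarrow> card (source_component (V - F') H) \<ge> max (f + 1) s))"

definition adj :: "(nat \<times> nat) set \<Rightarrow> nat \<Rightarrow> nat \<Rightarrow> real" where
  "adj H i j = (if i = j \<or> (j, i) \<in> H then 1 else 0)"

definition row_stochastic :: "nat set \<Rightarrow> (nat \<Rightarrow> nat \<Rightarrow> real) \<Rightarrow> bool" where
  "row_stochastic N M \<longleftrightarrow> (\<forall>i\<in>N. \<forall>j\<in>N. 0 \<le> M i j) \<and> (\<forall>i\<in>N. (\<Sum>j\<in>N. M i j) = 1)"

definition mmul :: "nat set \<Rightarrow> (nat \<Rightarrow> nat \<Rightarrow> real) \<Rightarrow> (nat \<Rightarrow> nat \<Rightarrow> real) \<Rightarrow> nat \<Rightarrow> nat \<Rightarrow> real" where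
  "mmul N P Q i j = (\<Sum>l\<in>N. P i l * Q l j)"

text \<open>Phi M N r d = M(r+d) \<cdots> M(r), i.e. \<Phi>(r+d, r).\<close>
fun Phi :: "(nat \<Rightarrow> nat \<Rightarrow> nat \<Rightarrow> real) \<Rightarrow> nat set \<Rightarrow> nat \<Rightarrow> nat \<Rightarrow> nat \<Rightarrow> nat \<Rightarrow> real" where
  "Phi M N r 0 = M r"
| "Phi M N r (Suc d) = mmul N (M (r + Suc d)) (Phi M N r d)"

end

theory Submission
  imports Defs
begin

lemma crossing:
  assumes H: "H \<subseteq> N \<times> N" and j: "j \<in> source_component N H" and jS: "j \<in> S"
    and SN: "S \<subseteq> N" and ne: "S \<noteq> N"
  shows "\<exists>q l. (q,l) \<in> H \<and> q \<in> S \<and> l \<in> N \<and> l \<notin> S"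
proof -
  obtain v where v: "v \<in> N" "v \<notin> S" using SN ne by blast
  have "v \<noteq> j" using v jS by auto
  hence jv: "(j,v) \<in> H\<^sup>+" using j v unfolding source_component_def by auto
  have "y \<in> S \<or> (\<exists>q l. (q,l) \<in> H \<and> q \<in> S \<and> l \<in> N \<and> l \<notin> S)" if "(j,y) \<in> H\<^sup>+" for y
    using that
  proof (induction rule: trancl_induct)
    case (base y) thus ?case using H jS by blast
  next
    case (step y z) thus ?case using H by blast
  qed
  from this[OF jv] show ?thesis using v by blast
qed

lemma card_filter_ins:
  assumes "finite B" "a \<notin> B"
  shows "card {t \<in> insert a B. P t} = card {t\<in>B. P t} + (if P a then 1 else 0)"
proof (cases "P a")
  case True
  hence "{t \<in> insert a B. P t} = insert a {t\<in>B. P t}" by auto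
  thus ?thesis using True assms by simp
next
  case False
  hence "{t \<in> insert a B. P t} = {t\<in>B. P t}" by auto
  thus ?thesis using False by simp
qed

theorem lemma3:
  fixes n k f :: nat and E :: "(nat \<times> nat) set" and A :: "nat \<Rightarrow> nat \<Rightarrow> real"
    and F :: "nat set" and M :: "nat \<Rightarrow> nat \<Rightarrow> nat \<Rightarrow> real" and \<beta> :: real
    and \<pi> :: "nat \<Rightarrow> nat \<Rightarrow> real"
  assumes E_sub: "E \<subseteq> agents n \<times> agents n"
    and no_loops: "\<forall>i. (i, i) \<notin> E"
    and A_assign: "assignment_matrix k n A"
    and F_sub: "F \<subseteq> agents n" and F_card: "card F \<le> f"
    and cond1: "condition1 (agents n) E f (sp k n A)"
    and M_stoch: "\<forall>t. row_stochastic (agents n - F) (M t)"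
    and beta: "0 < \<beta>" "\<beta> < 1"
    and M_lower: "\<forall>t. \<exists>H. reduced_graph (agents n) E f F H \<and>
                     (\<forall>i\<in>agents n - F. \<forall>j\<in>agents n - F. M t i j \<ge> \<beta> * adj H i j)"
    and limit: "\<forall>r. \<forall>i\<in>agents n - F. \<forall>j\<in>agents n - F.
                     (\<lambda>d. Phi M (agents n - F) r d i j) \<longlonglongrightarrow> \<pi> r j"
  shows "\<forall>r. \<exists>I. I \<subseteq> agents n - F \<and> card I \<ge> max (sp k n A) (f + 1) \<and>
           (\<forall>i\<in>I. \<pi> r i \<ge> \<beta> ^ (card {H. reduced_graph (agents n) E f F H} * (n - card F)))"
proof (intro allI)
  fix r
  define N where "N = agents n - F"
  define R where "R = {H. reduced_graph (agents n) E f F H}"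
  define m where "m = card N"
  have finN: "finite N" by (simp add: N_def agents_def)
  have finF: "finite F" using F_sub finite_subset by (auto simp: agents_def)
  have m_eq: "n - card F = m"
    unfolding m_def N_def using card_Diff_subset[OF finF F_sub] by (simp add: agents_def)
  have finE: "finite E" using E_sub finite_subset by (auto simp: agents_def)
  have "R \<subseteq> Pow E" unfolding R_def reduced_graph_def by auto
  hence finR: "finite R" using finE finite_subset by blast
  define Hs where "Hs t = (SOME H. reduced_graph (agents n) E f F H \<and>
                     (\<forall>i\<in>N. \<forall>j\<in>N. M t i j \<ge> \<beta> * adj H i j))" for t
  have Hs: "reduced_graph (agents n) E f F (Hs t) \<and> (\<forall>i\<in>N. \<forall>j\<in>N. M t i j \<ge> \<beta> * adj (Hs t) i j)" for t
    unfolding Hs_def N_def by (rule someI_ex) (use M_lower in blast)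
  have HsR: "Hs t \<in> R" for t using Hs R_def by blast
  have Mdiag: "M t i i \<ge> \<beta>" if "i \<in> N" for t i
  proof -
    have "\<beta> * adj (Hs t) i i \<le> M t i i" using Hs[of t] that by blast
    thus ?thesis by (simp add: adj_def)
  qed
  have Medge: "M t l q \<ge> \<beta>" if "(q,l) \<in> Hs t" "l \<in> N" "q \<in> N" for t l q
  proof -
    have "\<beta> * adj (Hs t) l q \<le> M t l q" using Hs[of t] that by blast
    thus ?thesis using that by (simp add: adj_def)
  qed
  have Mnn: "0 \<le> M t i j" if "i \<in> N" "j \<in> N" for t i j
    using M_stoch that unfolding row_stochastic_def N_def by blast
  have Mrow: "(\<Sum>j\<in>N. M t i j) = 1" if "i \<in> N" for t i
    using M_stoch that unfolding row_stochastic_def N_def by blast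
  have Hsub: "H \<subseteq> N \<times> N" if "H \<in> R" for H using that unfolding R_def reduced_graph_def N_def by auto
  have srcC: "card (source_component N H) \<ge> max (f+1) (sp k n A)" if "H \<in> R" for H
    using cond1 F_sub F_card that unfolding condition1_def R_def N_def by blast
  have Rne: "R \<noteq> {}" using HsR by blast
  hence taupos: "card R \<ge> 1" using finR by (simp add: Suc_le_eq card_gt_0_iff)
  have "source_component N (Hs 0) \<subseteq> N" by (auto simp: source_component_def)
  hence "card (source_component N (Hs 0)) \<le> m" unfolding m_def using finN card_mono by blast
  hence mpos: "m \<ge> 1" using srcC[OF HsR[of 0]] by linarith
  define \<nu> where "\<nu> = card R * m"
  have nupos: "\<nu> \<ge> 1" unfolding \<nu>_def using taupos mpos by (simp add: Suc_le_eq)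
  obtain H where HR: "H \<in> R" and Hcnt: "card {t \<in> {r..<r+\<nu>}. Hs t = H} \<ge> m"
  proof -
    have eqU: "{r..<r+\<nu>} = (\<Union>H\<in>R. {t \<in> {r..<r+\<nu>}. Hs t = H})" using HsR by auto
    have "card {r..<r+\<nu>} = (\<Sum>H\<in>R. card {t \<in> {r..<r+\<nu>}. Hs t = H})"
      by (subst eqU, rule card_UN_disjoint) (use finR in auto)
    hence cs: "\<nu> = (\<Sum>H\<in>R. card {t \<in> {r..<r+\<nu>}. Hs t = H})" by simp
    show ?thesis
    proof (rule ccontr)
      assume "\<not> ?thesis"
      hence "\<forall>H\<in>R. card {t \<in> {r..<r+\<nu>}. Hs t = H} \<le> m - 1" using that by force
      hence "(\<Sum>H\<in>R. card {t \<in> {r..<r+\<nu>}. Hs t = H}) \<le> card R * (m - 1)"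
        using sum_bounded_above[of R _ "m-1"] by auto
      also have "\<dots> < card R * m" using taupos mpos by simp
      finally show False using cs \<nu>_def by simp
    qed
  qed
  define I where "I = source_component N H"
  have IN: "I \<subseteq> N" by (auto simp: I_def source_component_def)
  have key: "\<pi> r j \<ge> \<beta> ^ \<nu>" if jI: "j \<in> I" for j
  proof -
    have jN: "j \<in> N" using jI IN by blast
    have PhiS: "Phi M N r (Suc d) l q = (\<Sum>p\<in>N. M (r + Suc d) l p * Phi M N r d p q)" for d l q
      by (simp add: mmul_def)
    have Pnn: "\<forall>l\<in>N. \<forall>q\<in>N. 0 \<le> Phi M N r d l q" for d
    proof (induction d)
      case 0 thus ?case using Mnn by simp
    next
      case (Suc d) thus ?case unfolding PhiS using Mnn by (auto intro!: sum_nonneg)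
    qed
    have trm: "M (r + Suc d) l p * Phi M N r d p j \<le> Phi M N r (Suc d) l j"
      if "l \<in> N" "p \<in> N" for d l p
      unfolding PhiS
      by (rule member_le_sum) (use that Mnn Pnn jN finN in \<open>auto intro!: mult_nonneg_nonneg\<close>)
    define S where "S d = {l\<in>N. Phi M N r d l j \<ge> \<beta> ^ Suc d}" for d
    define cnt where "cnt d = card {t \<in> {r..r+d}. Hs t = H}" for d
    have cnt0: "cnt 0 \<le> 1"
    proof -
      have "{t \<in> {r..r+0}. Hs t = H} \<subseteq> {r}" by auto
      thus ?thesis unfolding cnt_def using card_mono[of "{r}"] by fastforce
    qed
    have cntS: "cnt (Suc d) = cnt d + (if Hs (r + Suc d) = H then 1 else 0)" for d
    proof -
      have iv: "{r..r+Suc d} = insert (r+Suc d) {r..r+d}" by auto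
      show ?thesis unfolding cnt_def iv
        by (rule card_filter_ins) auto
    qed
    have SN: "S d \<subseteq> N" for d by (auto simp: S_def)
    have finS: "finite (S d)" for d using SN finN finite_subset by blast
    have bpos: "0 \<le> \<beta> ^ x" for x using beta by simp
    have Smono: "S d \<subseteq> S (Suc d)" for d
    proof
      fix l assume l: "l \<in> S d"
      hence lN: "l \<in> N" by (simp add: S_def)
      have "\<beta> * \<beta> ^ Suc d \<le> M (r + Suc d) l l * Phi M N r d l j"
        using l Mdiag[OF lN] beta Mnn[OF lN lN] by (intro mult_mono) (auto simp: S_def)
      also have "\<dots> \<le> Phi M N r (Suc d) l j" using trm lN by blast
      finally show "l \<in> S (Suc d)" using lN by (simp add: S_def)
    qed
    have grow: "j \<in> S d \<and> min m (cnt d) \<le> card (S d)" for d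
    proof (induction d)
      case 0
      have "j \<in> S 0" using Mdiag[OF jN] jN by (simp add: S_def)
      moreover hence "card (S 0) \<ge> 1" using finS by (simp add: Suc_le_eq card_gt_0_iff) blast
      ultimately show ?case using cnt0 by simp
    next
      case (Suc d)
      have jS: "j \<in> S (Suc d)" using Suc Smono by blast
      have cm: "card (S d) \<le> card (S (Suc d))" using Smono finS card_mono by blast
      show ?case
      proof (cases "Hs (r + Suc d) = H")
        case False thus ?thesis using Suc cm jS cntS[of d] by simp
      next
        case True
        show ?thesis
        proof (cases "S d = N")
          case True
          hence "S (Suc d) = N" using Smono[of d] SN[of "Suc d"] by blast
          hence "card (S (Suc d)) \<ge> m" unfolding m_def by simp
          thus ?thesis using jS by simp
        next
          case False
          obtain q l where ql: "(q,l) \<in> H" "q \<in> S d" "l \<in> N" "l \<notin> S d"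
            using crossing[OF Hsub[OF HR] jI[unfolded I_def] _ SN False] Suc by blast
          have qN: "q \<in> N" using ql SN by blast
          have "\<beta> * \<beta> ^ Suc d \<le> M (r + Suc d) l q * Phi M N r d q j"
            using ql Medge[of q l "r + Suc d"] True qN beta Mnn[OF ql(3) qN] by (intro mult_mono) (auto simp: S_def)
          also have "\<dots> \<le> Phi M N r (Suc d) l j" using trm ql(3) qN by blast
          finally have "l \<in> S (Suc d)" using ql(3) by (simp add: S_def)
          hence "insert l (S d) \<subseteq> S (Suc d)" using Smono by blast
          hence "card (insert l (S d)) \<le> card (S (Suc d))" using finS card_mono by blast
          hence "card (S d) + 1 \<le> card (S (Suc d))" using ql(4) finS by simp
          moreover have "min m (Suc (cnt d)) \<le> Suc (min m (cnt d))" by (simp add: min_def)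
          moreover have "cnt (Suc d) = Suc (cnt d)" using cntS[of d] True by simp
          moreover have "min m (cnt d) \<le> card (S d)" using Suc by blast
          ultimately have "min m (cnt (Suc d)) \<le> card (S (Suc d))" by linarith
          thus ?thesis using jS by blast
        qed
      qed
    qed
    define d0 where "d0 = \<nu> - 1"
    have nu_eq: "Suc d0 = \<nu>" using nupos unfolding d0_def by simp
    have "{r..r+d0} = {r..<r+\<nu>}" using nu_eq by auto
    hence "cnt d0 \<ge> m" using Hcnt unfolding cnt_def by simp
    hence "card (S d0) \<ge> m" using grow[of d0] by simp
    hence "card N \<le> card (S d0)" unfolding m_def .
    hence "S d0 = N" using card_subset_eq[OF finN SN[of d0]] card_mono[OF finN SN[of d0]] by linarith
    hence base0: "\<forall>l\<in>N. Phi M N r d0 l j \<ge> \<beta> ^ \<nu>" unfolding S_def nu_eq[symmetric] by blast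
    have propg: "\<forall>l\<in>N. Phi M N r d l j \<ge> \<beta> ^ \<nu>" if "d0 \<le> d" for d
      using that
    proof (induction rule: dec_induct)
      case base thus ?case using base0 by simp
    next
      case (step d)
      show ?case
      proof
        fix l assume lN: "l \<in> N"
        have "(\<Sum>p\<in>N. M (r + Suc d) l p * \<beta> ^ \<nu>) \<le> (\<Sum>p\<in>N. M (r + Suc d) l p * Phi M N r d p j)"
          using step.IH Mnn lN by (intro sum_mono mult_left_mono) auto
        moreover have "(\<Sum>p\<in>N. M (r + Suc d) l p * \<beta> ^ \<nu>) = \<beta> ^ \<nu>"
          using Mrow[OF lN] by (simp add: sum_distrib_right[symmetric])
        ultimately show "\<beta> ^ \<nu> \<le> Phi M N r (Suc d) l j" unfolding PhiS by simp
      qed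
    qed
    have lim: "(\<lambda>d. Phi M N r d j j) \<longlonglongrightarrow> \<pi> r j" using limit jN unfolding N_def by blast
    show ?thesis
      by (rule LIMSEQ_le_const[OF lim]) (use propg jN in blast)
  qed
  show "\<exists>I. I \<subseteq> agents n - F \<and> card I \<ge> max (sp k n A) (f + 1) \<and>
           (\<forall>i\<in>I. \<pi> r i \<ge> \<beta> ^ (card {H. reduced_graph (agents n) E f F H} * (n - card F)))"
  proof (rule exI[of _ I], intro conjI ballI)
    show "I \<subseteq> agents n - F" using IN N_def by simp
    show "card I \<ge> max (sp k n A) (f + 1)" using srcC[OF HR] unfolding I_def by (simp add: max.commute)
    fix i assume "i \<in> I"
    hence "\<pi> r i \<ge> \<beta> ^ \<nu>" by (rule key)
    moreover have "card {H. reduced_graph (agents n) E f F H} * (n - card F) = \<nu>"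
      unfolding \<nu>_def R_def m_eq ..
    ultimately show "\<pi> r i \<ge> \<beta> ^ (card {H. reduced_graph (agents n) E f F H} * (n - card F))" by simp
  qed
qed

end
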